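(* Let $f$ satisfy the Standing Assumption below and let $E_*\in J$ with $E_*=f_-(\theta_-)=f_+(\theta_+)$, $\theta_\pm\in I_\pm$. If $\|T_f(E_* )\|_{\mathbb{T}}\ge 7\nu/d$, then $|\partial_\theta f_\pm(\theta_\pm)|\ge\nu$ for both signs.
   Context: Standing Assumption: $I_-,I_+\subset\mathbb{T}$ are closed intervals with disjoint interiors, $I=I_-\cup I_+$, $J\subset\mathbb{R}$ is a closed interval, and $f:I\to J$ is $C^2$ with $f_\pm:=f|_{I_\pm}$ satisfying $\pm\partial_\theta f_\pm\ge 0$. Moreover: (1) $d\le|\partial_\theta f|+|\partial_\theta^2 f|\le D$ on $I$ for constants $0<d\le D$; (2) $f_\pm(I_\pm)=J$; (3) there is a constant $0<\nu<d/2$ with $|\partial_\theta f|\ge\nu$ at the boundary points of $I$. By (2) and monotonicity, the inverses $f_\pm^{-1}:J\to I_\pm$ are defined, and $T_f:J\to I_+-I_-$ is $T_f(E)=f_+^{-1}(E)-f_-^{-1}(E)$. $\|x\|_{\mathbb{T}}$ denotes distance to the nearest integer. *)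

theory Defs
  imports "HOL-Analysis.Analysis"
begin

text \<open>The circle T = R/Z is handled via lifts: a subset A of R stands for its image
  in T, and circ_lift A is its full preimage in R (all integer translates).\<close>
definition circ_lift :: "real set \<Rightarrow> real set" where
  "circ_lift A = {x. \<exists>k::int. x - of_int k \<in> A}"

definition tnorm :: "real \<Rightarrow> real" where
  "tnorm x = infdist x \<int>"

text \<open>T_f(E) = f_+^{-1}(E) - f_-^{-1}(E), with I_- = [am,bm], I_+ = [ap,bp] (lifts).\<close>
definition Tf :: "(real \<Rightarrow> real) \<Rightarrow> real \<Rightarrow> real \<Rightarrow> real \<Rightarrow> real \<Rightarrow> real \<Rightarrow> real" where
  "Tf f am bm ap bp E = the_inv_into {ap..bp} f E - the_inv_into {am..bm} f E"

end

theory Submission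
  imports Defs
begin


definition C2on :: "(real\<Rightarrow>real) \<Rightarrow> (real\<Rightarrow>real) \<Rightarrow> (real\<Rightarrow>real) \<Rightarrow> real set \<Rightarrow> bool" where
"C2on f f1 f2 U \<longleftrightarrow> (\<forall>x\<in>U. (f has_real_derivative f1 x) (at x within U)) \<and>
   (\<forall>x\<in>U. (f1 has_real_derivative f2 x) (at x within U)) \<and> continuous_on U f2"

lemma C2on_subset: "C2on f f1 f2 U \<Longrightarrow> V \<subseteq> U \<Longrightarrow> C2on f f1 f2 V"
  unfolding C2on_def by (meson continuous_on_subset has_field_derivative_subset subsetD)

lemma C2on_neg: "C2on f f1 f2 U \<Longrightarrow> C2on (\<lambda>x. - f x) (\<lambda>x. - f1 x) (\<lambda>x. - f2 x) U"
  unfolding C2on_def by (auto intro!: derivative_eq_intros continuous_intros)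

lemma refl_deriv:
  assumes "(f has_real_derivative D) (at (-x) within U)"
  shows "((\<lambda>x. f (-x)) has_real_derivative - D) (at x within uminus ` U)"
proof -
  have "((\<lambda>x. -x) has_real_derivative -1) (at x within uminus ` U)"
    by (auto intro!: derivative_eq_intros)
  moreover have "uminus ` (uminus ` U) = U" by (simp add: image_image)
  ultimately have "(f \<circ> (\<lambda>x. -x) has_real_derivative D * -1) (at x within uminus ` U)"
    using DERIV_image_chain[of f D "(\<lambda>x. -x)" x "uminus ` U" "-1"] assms by simp
  thus ?thesis by (simp add: o_def)
qed

lemma C2on_refl: "C2on f f1 f2 U \<Longrightarrow> C2on (\<lambda>x. f (-x)) (\<lambda>x. - f1 (-x)) (\<lambda>x. f2 (-x)) (uminus ` U)"
  unfolding C2on_def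
proof (intro conjI ballI)
  assume h: "(\<forall>x\<in>U. (f has_real_derivative f1 x) (at x within U)) \<and>
    (\<forall>x\<in>U. (f1 has_real_derivative f2 x) (at x within U)) \<and> continuous_on U f2"
  fix x assume "x \<in> uminus ` U"
  hence x: "-x \<in> U" by auto
  show "((\<lambda>x. f (- x)) has_real_derivative - f1 (- x)) (at x within uminus ` U)"
    using refl_deriv h x by blast
  have "((\<lambda>x. f1 (- x)) has_real_derivative - f2 (- x)) (at x within uminus ` U)"
    using refl_deriv h x by blast
  thus "((\<lambda>x. - f1 (- x)) has_real_derivative f2 (- x)) (at x within uminus ` U)"
    using DERIV_minus by fastforce
next
  assume h: "(\<forall>x\<in>U. (f has_real_derivative f1 x) (at x within U)) \<and>
    (\<forall>x\<in>U. (f1 has_real_derivative f2 x) (at x within U)) \<and> continuous_on U f2"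
  show "continuous_on (uminus ` U) (\<lambda>x. f2 (- x))"
    by (rule continuous_on_compose2[OF conjunct2[OF conjunct2[OF h]]]) (auto intro!: continuous_intros)
qed

lemma C2on_cont1: "C2on f f1 f2 U \<Longrightarrow> continuous_on U f1"
  unfolding C2on_def by (meson DERIV_continuous continuous_on_eq_continuous_within)

lemma C2on_cont0: "C2on f f1 f2 U \<Longrightarrow> continuous_on U f"
  unfolding C2on_def by (meson DERIV_continuous continuous_on_eq_continuous_within)

lemma mvt1:
  assumes "\<forall>x\<in>U. (g has_real_derivative g1 x) (at x within U)" "a \<le> b" "{a..b} \<subseteq> U"
  shows "\<exists>\<xi>\<in>{a..b}. g b - g a = g1 \<xi> * (b - a)"
proof -
  have "\<And>x. a \<le> x \<Longrightarrow> x \<le> b \<Longrightarrow> (g has_derivative (\<lambda>h. g1 x * h)) (at x within {a..b})"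
    using assms by (metis atLeastAtMost_iff has_field_derivative_imp_has_derivative has_field_derivative_subset subsetD mult.commute)
  from mvt_very_simple[OF assms(2) this] show ?thesis by auto
qed

lemma incr_ge:
  assumes "\<forall>x\<in>U. (g has_real_derivative g1 x) (at x within U)" "a \<le> b" "{a..b} \<subseteq> U"
    "\<forall>x\<in>{a..b}. g1 x \<ge> k"
  shows "g b - g a \<ge> k * (b - a)"
proof -
  obtain \<xi> where "\<xi>\<in>{a..b}" "g b - g a = g1 \<xi> * (b - a)" using mvt1[OF assms(1-3)] by blast
  thus ?thesis using assms(2,4) by (simp add: mult_right_mono)
qed

lemma incr_le:
  assumes "\<forall>x\<in>U. (g has_real_derivative g1 x) (at x within U)" "a \<le> b" "{a..b} \<subseteq> U"
    "\<forall>x\<in>{a..b}. g1 x \<le> k"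
  shows "g b - g a \<le> k * (b - a)"
proof -
  obtain \<xi> where "\<xi>\<in>{a..b}" "g b - g a = g1 \<xi> * (b - a)" using mvt1[OF assms(1-3)] by blast
  thus ?thesis using assms(2,4) by (simp add: mult_right_mono)
qed


lemma sign_const:
  fixes g :: "real \<Rightarrow> real"
  assumes c: "continuous_on {x1..x2} g" and nz: "\<forall>x\<in>{x1..x2}. g x \<noteq> 0"
    and z: "z \<in> {x1..x2}" "g z > 0"
  shows "\<forall>x\<in>{x1..x2}. g x > 0"
proof
  fix x assume x: "x \<in> {x1..x2}"
  show "g x > 0"
  proof (rule ccontr)
    assume "\<not> g x > 0"
    hence gx: "g x \<le> 0" by simp
    show False
    proof (cases "x \<le> z")
      case True
      have "continuous_on {x..z} g" using c x z by (auto intro: continuous_on_subset)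
      from IVT'[of g x 0 z, OF gx _ True this] z obtain w where "x \<le> w" "w \<le> z" "g w = 0" by auto
      thus False using nz x z by auto
    next
      case False
      have "continuous_on {z..x} g" using c x z by (auto intro: continuous_on_subset)
      from IVT2'[of g x 0 z, OF gx _ _ this] z False obtain w where "z \<le> w" "w \<le> x" "g w = 0" by auto
      thus False using nz x z by auto
    qed
  qed
qed

lemma taylor_left:
  assumes C: "C2on f f1 f2 U" and yp: "y \<le> p" "{y..p} \<subseteq> U" and f1p: "f1 p = 0"
    and k: "\<forall>x\<in>{y..p}. f2 x \<ge> k"
  shows "f y \<ge> f p + k * (p - y)^2 / 2"
proof -
  have D1: "\<forall>x\<in>U. (f has_real_derivative f1 x) (at x within U)"
   and D2: "\<forall>x\<in>U. (f1 has_real_derivative f2 x) (at x within U)" using C unfolding C2on_def by auto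
  define h where "h x = f1 x + k * (p - x)" for x
  have Dh: "\<forall>x\<in>U. (h has_real_derivative (f2 x - k)) (at x within U)"
    unfolding h_def using D2 by (auto intro!: derivative_eq_intros)
  have hle: "\<forall>x\<in>{y..p}. h x \<le> 0"
  proof
    fix x assume x: "x \<in> {y..p}"
    have "h p - h x \<ge> 0 * (p - x)"
      by (rule incr_ge[OF Dh]) (use x yp k in auto)
    thus "h x \<le> 0" using f1p by (simp add: h_def)
  qed
  define G where "G x = f x - k * (p - x)^2 / 2" for x
  have DG: "\<forall>x\<in>U. (G has_real_derivative h x) (at x within U)"
    unfolding G_def h_def using D1 by (auto intro!: derivative_eq_intros simp: field_simps)
  have "G p - G y \<le> 0 * (p - y)"
    by (rule incr_le[OF DG yp]) (use hle in auto)
  thus ?thesis by (simp add: G_def)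
qed

lemma lemA:
  assumes C: "C2on f f1 f2 {q..\<theta>}" and q: "q \<le> \<theta>" and pos: "\<forall>x\<in>{q..\<theta>}. f1 x \<ge> 0"
    and bnd: "\<forall>x\<in>{q..\<theta>}. d \<le> \<bar>f1 x\<bar> + \<bar>f2 x\<bar>"
    and th: "f1 \<theta> < \<nu>" "f2 \<theta> > 0" and nu: "0 < \<nu>" "\<nu> < d/2"
  shows "\<forall>x\<in>{q..\<theta>}. f2 x \<ge> d - \<nu> \<and> f1 x \<le> f1 \<theta>"
proof -
  have D1: "\<forall>x\<in>{q..\<theta>}. (f has_real_derivative f1 x) (at x within {q..\<theta>})"
   and D2: "\<forall>x\<in>{q..\<theta>}. (f1 has_real_derivative f2 x) (at x within {q..\<theta>})"
   and c2: "continuous_on {q..\<theta>} f2" using C unfolding C2on_def by auto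
  have p2: "\<forall>x\<in>{q..\<theta>}. f2 x > 0"
  proof (rule ccontr)
    assume "\<not> (\<forall>x\<in>{q..\<theta>}. f2 x > 0)"
    then obtain x1 where x1: "x1 \<in> {q..\<theta>}" "f2 x1 \<le> 0" by force
    define Z where "Z = {q..\<theta>} \<inter> f2 -` {..0}"
    have clZ: "closed Z" unfolding Z_def by (rule continuous_closed_preimage[OF c2]) auto
    have neZ: "Z \<noteq> {}" using x1 unfolding Z_def by auto
    have bZ: "bdd_above Z" unfolding Z_def by (auto intro: bdd_aboveI[of _ \<theta>])
    define x0 where "x0 = Sup Z"
    have x0Z: "x0 \<in> Z" unfolding x0_def by (rule closed_contains_Sup[OF neZ bZ clZ])
    have above: "\<And>y. y \<in> {q..\<theta>} \<Longrightarrow> y > x0 \<Longrightarrow> f2 y > 0"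
    proof -
      fix y assume y: "y \<in> {q..\<theta>}" "y > x0"
      show "f2 y > 0"
      proof (rule ccontr)
        assume "\<not> f2 y > 0" hence "y \<in> Z" using y unfolding Z_def by auto
        hence "y \<le> x0" unfolding x0_def using bZ by (simp add: cSup_upper)
        thus False using y by simp
      qed
    qed
    have x0r: "x0 \<in> {q..\<theta>}" "f2 x0 \<le> 0" using x0Z unfolding Z_def by auto
    have x0lt: "x0 < \<theta>" using x0r th by (metis atLeastAtMost_iff order.not_eq_order_implies_strict not_le)
    have f2x0: "f2 x0 = 0"
    proof (rule ccontr)
      assume "f2 x0 \<noteq> 0" hence neg: "f2 x0 < 0" using x0r by simp
      from c2 x0r(1) obtain \<delta> where \<delta>: "\<delta> > 0" "\<forall>x'\<in>{q..\<theta>}. dist x' x0 < \<delta> \<longrightarrow> dist (f2 x') (f2 x0) < - f2 x0"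
        unfolding continuous_on_iff using neg by (metis neg_0_less_iff_less)
      define y where "y = min (x0 + \<delta>/2) \<theta>"
      have y: "y \<in> {q..\<theta>}" "y > x0" "dist y x0 < \<delta>" using x0r x0lt \<delta> by (auto simp: y_def dist_real_def)
      have "\<bar>f2 y - f2 x0\<bar> < - f2 x0" using \<delta>(2) y by (auto simp: dist_real_def)
      hence "f2 y < 0" by linarith
      thus False using above y by force
    qed
    have "f1 \<theta> - f1 x0 \<ge> 0 * (\<theta> - x0)"
      by (rule incr_ge[OF D2]) (use x0r x0lt above f2x0 in \<open>auto simp: le_less\<close>)
    moreover have "f1 x0 \<ge> d" using bnd pos x0r f2x0 by force
    ultimately show False using th nu by simp
  qed
  show ?thesis
  proof
    fix x assume x: "x \<in> {q..\<theta>}"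
    have "f1 \<theta> - f1 x \<ge> 0 * (\<theta> - x)"
      by (rule incr_ge[OF D2]) (use x p2 in \<open>auto simp: less_imp_le\<close>)
    hence "f1 x \<le> f1 \<theta>" by simp
    moreover have "f2 x \<ge> d - \<nu>" using bnd x p2 pos th \<open>f1 x \<le> f1 \<theta>\<close> by force
    ultimately show "f2 x \<ge> d - \<nu> \<and> f1 x \<le> f1 \<theta>" by simp
  qed
qed


lemma max_closed:
  fixes g :: "real \<Rightarrow> real"
  assumes c2: "continuous_on {a..b} g" and x1: "x1 \<in> {a..b}" "g x1 \<le> c"
  shows "\<exists>y0\<in>{a..b}. g y0 \<le> c \<and> (\<forall>y\<in>{a..b}. y > y0 \<longrightarrow> g y > c)"
proof -
  define Z where "Z = {a..b} \<inter> g -` {..c}"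
  have clZ: "closed Z" unfolding Z_def by (rule continuous_closed_preimage[OF c2]) auto
  have neZ: "Z \<noteq> {}" using x1 unfolding Z_def by auto
  have bZ: "bdd_above Z" unfolding Z_def by (auto intro: bdd_aboveI[of _ b])
  define x0 where "x0 = Sup Z"
  have x0Z: "x0 \<in> Z" unfolding x0_def by (rule closed_contains_Sup[OF neZ bZ clZ])
  have "\<forall>y\<in>{a..b}. y > x0 \<longrightarrow> g y > c"
  proof (intro ballI impI)
    fix y assume y: "y \<in> {a..b}" "y > x0"
    show "g y > c"
    proof (rule ccontr)
      assume "\<not> g y > c" hence "y \<in> Z" using y unfolding Z_def by auto
      hence "y \<le> x0" unfolding x0_def using bZ by (simp add: cSup_upper)
      thus False using y by simp
    qed
  qed
  thus ?thesis using x0Z unfolding Z_def by auto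
qed

lemma min_closed:
  fixes g :: "real \<Rightarrow> real"
  assumes c2: "continuous_on {a..b} g" and x1: "x1 \<in> {a..b}" "g x1 \<le> c"
  shows "\<exists>y0\<in>{a..b}. g y0 \<le> c \<and> (\<forall>y\<in>{a..b}. y < y0 \<longrightarrow> g y > c)"
proof -
  define Z where "Z = {a..b} \<inter> g -` {..c}"
  have clZ: "closed Z" unfolding Z_def by (rule continuous_closed_preimage[OF c2]) auto
  have neZ: "Z \<noteq> {}" using x1 unfolding Z_def by auto
  have bZ: "bdd_below Z" unfolding Z_def by (auto intro: bdd_belowI[of _ a])
  define x0 where "x0 = Inf Z"
  have x0Z: "x0 \<in> Z" unfolding x0_def by (rule closed_contains_Inf[OF neZ bZ clZ])
  have "\<forall>y\<in>{a..b}. y < x0 \<longrightarrow> g y > c"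
  proof (intro ballI impI)
    fix y assume y: "y \<in> {a..b}" "y < x0"
    show "g y > c"
    proof (rule ccontr)
      assume "\<not> g y > c" hence "y \<in> Z" using y unfolding Z_def by auto
      hence "x0 \<le> y" unfolding x0_def using bZ by (simp add: cInf_lower)
      thus False using y by simp
    qed
  qed
  thus ?thesis using x0Z unfolding Z_def by auto
qed

lemma cont_push_right:
  fixes g :: "real \<Rightarrow> real"
  assumes c2: "continuous_on {a..b} g" and x0: "x0 \<in> {a..b}" "x0 < b" "g x0 < c"
  shows "\<exists>y\<in>{a..b}. y > x0 \<and> g y < c"
proof -
  from c2 x0(1) obtain \<delta> where \<delta>: "\<delta> > 0" "\<forall>x'\<in>{a..b}. dist x' x0 < \<delta> \<longrightarrow> dist (g x') (g x0) < c - g x0"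
    unfolding continuous_on_iff using x0(3) by (metis diff_gt_0_iff_gt)
  define y where "y = min (x0 + \<delta>/2) b"
  have y: "y \<in> {a..b}" "y > x0" "dist y x0 < \<delta>" using x0 \<delta> by (auto simp: y_def dist_real_def)
  have "\<bar>g y - g x0\<bar> < c - g x0" using \<delta>(2) y by (auto simp: dist_real_def)
  hence "g y < c" by linarith
  thus ?thesis using y by blast
qed

lemma cont_push_left:
  fixes g :: "real \<Rightarrow> real"
  assumes c2: "continuous_on {a..b} g" and x0: "x0 \<in> {a..b}" "a < x0" "g x0 < c"
  shows "\<exists>y\<in>{a..b}. y < x0 \<and> g y < c"
proof -
  from c2 x0(1) obtain \<delta> where \<delta>: "\<delta> > 0" "\<forall>x'\<in>{a..b}. dist x' x0 < \<delta> \<longrightarrow> dist (g x') (g x0) < c - g x0"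
    unfolding continuous_on_iff using x0(3) by (metis diff_gt_0_iff_gt)
  define y where "y = max (x0 - \<delta>/2) a"
  have y: "y \<in> {a..b}" "y < x0" "dist y x0 < \<delta>" using x0 \<delta> by (auto simp: y_def dist_real_def)
  have "\<bar>g y - g x0\<bar> < c - g x0" using \<delta>(2) y by (auto simp: dist_real_def)
  hence "g y < c" by linarith
  thus ?thesis using y by blast
qed



lemma lemB:
  assumes C: "C2on f f1 f2 {L..\<theta>}" and ord: "L \<le> p" "p \<le> \<theta>"
   and neg: "\<forall>x\<in>{L..p}. f1 x \<le> 0" and pos: "\<forall>x\<in>{p..\<theta>}. f1 x \<ge> 0"
   and bnd: "\<forall>x\<in>{L..\<theta>}. d \<le> \<bar>f1 x\<bar> + \<bar>f2 x\<bar>"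
   and th: "f1 \<theta> < \<nu>" "f2 \<theta> > 0" and nu: "0 < \<nu>" "\<nu> < d/2"
   and tm: "\<theta>m \<in> {L..p}" "f \<theta>m = f \<theta>"
  shows "\<theta> - \<theta>m < 7 * \<nu> / d"
proof -
  define a where "a = d - \<nu>"
  have a: "a > \<nu>" "d < 2 * a" using nu by (auto simp: a_def)
  have D1: "\<forall>x\<in>{L..\<theta>}. (f has_real_derivative f1 x) (at x within {L..\<theta>})"
   and D2: "\<forall>x\<in>{L..\<theta>}. (f1 has_real_derivative f2 x) (at x within {L..\<theta>})"
   and c2: "continuous_on {L..\<theta>} f2" using C unfolding C2on_def by auto
  have c1: "continuous_on {L..\<theta>} f1" using C2on_cont1[OF C] .
  have nz: "\<And>x. x \<in> {L..\<theta>} \<Longrightarrow> \<bar>f1 x\<bar> \<le> \<nu> \<Longrightarrow> \<bar>f2 x\<bar> \<ge> a"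
    using bnd a_def by force
  have nzp: "\<And>x. x \<in> {L..\<theta>} \<Longrightarrow> \<bar>f1 x\<bar> \<le> \<nu> \<Longrightarrow> f2 x > 0 \<Longrightarrow> f2 x \<ge> a"
    using nz by fastforce
  have nzn: "\<And>x. x \<in> {L..\<theta>} \<Longrightarrow> \<bar>f1 x\<bar> \<le> \<nu> \<Longrightarrow> f2 x < 0 \<Longrightarrow> f2 x \<le> -a"
    using nz by fastforce
  have nz0: "\<And>x. x \<in> {L..\<theta>} \<Longrightarrow> \<bar>f1 x\<bar> \<le> \<nu> \<Longrightarrow> f2 x \<noteq> 0"
    using nz a nu by fastforce
  have Cp: "C2on f f1 f2 {p..\<theta>}" using C2on_subset[OF C] ord by auto
  have Ares: "\<forall>x\<in>{p..\<theta>}. f2 x \<ge> d - \<nu> \<and> f1 x \<le> f1 \<theta>"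
    by (rule lemA[OF Cp ord(2) pos]) (use bnd ord th nu in auto)
  have f1p: "f1 p = 0" using neg pos ord by force
  define t where "t = \<theta> - p"
  have t0: "t \<ge> 0" using ord by (simp add: t_def)
  have "f1 \<theta> - f1 p \<ge> a * (\<theta> - p)"
    by (rule incr_ge[OF D2]) (use ord Ares a_def in auto)
  hence at: "a * t < \<nu>" using th f1p by (simp add: t_def)
  have "f \<theta> - f p \<le> f1 \<theta> * (\<theta> - p)"
    by (rule incr_le[OF D1]) (use ord Ares in auto)
  hence ft: "f \<theta> - f p \<le> \<nu> * t"
    using th t0 mult_right_mono[of "f1 \<theta>" \<nu> t] unfolding t_def by linarith
  have f2p: "f2 p \<ge> a" using Ares ord a_def by auto
  have pL: "p \<in> {L..\<theta>}" using ord by auto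
  have tmL: "\<theta>m \<le> p" "L \<le> \<theta>m" using tm by auto
  have goal: "a * (\<theta> - \<theta>m) < 7/2 * \<nu>"
  proof (cases "\<forall>x\<in>{\<theta>m..p}. f1 x > -\<nu>")
    case True
    have sub: "{\<theta>m..p} \<subseteq> {L..\<theta>}" using tmL ord by auto
    have f1b: "\<forall>x\<in>{\<theta>m..p}. \<bar>f1 x\<bar> \<le> \<nu>"
    proof
      fix x assume x: "x \<in> {\<theta>m..p}"
      have "f1 x \<le> 0" using neg x tmL by auto
      moreover have "f1 x > -\<nu>" using True x by blast
      ultimately show "\<bar>f1 x\<bar> \<le> \<nu>" by simp
    qed
    have sp: "\<forall>x\<in>{\<theta>m..p}. f2 x > 0"
    proof (rule sign_const[of \<theta>m p f2 p])
      show "continuous_on {\<theta>m..p} f2" using continuous_on_subset[OF c2 sub] .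
      show "\<forall>x\<in>{\<theta>m..p}. f2 x \<noteq> 0"
      proof
        fix x assume x: "x \<in> {\<theta>m..p}"
        have "\<bar>f2 x\<bar> \<ge> a" using nz f1b sub x by blast
        thus "f2 x \<noteq> 0" using a nu by auto
      qed
      show "p \<in> {\<theta>m..p}" using tmL by simp
      show "0 < f2 p" using f2p a nu by simp
    qed
    have f2a: "\<forall>x\<in>{\<theta>m..p}. f2 x \<ge> a"
    proof
      fix x assume x: "x \<in> {\<theta>m..p}"
      show "f2 x \<ge> a" using nzp[of x] sp f1b sub x by blast
    qed
    have Cs: "C2on f f1 f2 {L..\<theta>}" by (rule C)
    have "f \<theta>m \<ge> f p + a * (p - \<theta>m)^2 / 2"
      by (rule taylor_left[OF C tmL(1) sub f1p f2a])
    hence q: "a * (p - \<theta>m)^2 / 2 \<le> \<nu> * t" using ft tm by simp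
    define s where "s = p - \<theta>m"
    have s0: "s \<ge> 0" using tmL by (simp add: s_def)
    have q1: "a * s^2 \<le> 2 * \<nu> * t" using q unfolding s_def by simp
    have q2: "a * (a * s^2) \<le> a * (2 * \<nu> * t)" by (rule mult_left_mono[OF q1]) (use a nu in simp)
    have "(a * s)^2 \<le> 2 * \<nu> * (a * t)" using q2 by (simp add: power2_eq_square algebra_simps)
    also have "\<dots> < 2 * \<nu> * \<nu>" using mult_strict_left_mono[OF at, of "2*\<nu>"] nu by simp
    finally have "(a * s)^2 < 2 * \<nu>^2" by (simp add: power2_eq_square)
    hence "a * s < 3/2 * \<nu>"
    proof -
      assume h: "(a * s)^2 < 2 * \<nu>^2"
      show ?thesis
      proof (rule ccontr)
        assume "\<not> a * s < 3/2 * \<nu>"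
        hence "3/2 * \<nu> \<le> a * s" by simp
        from power_mono[OF this, of 2] nu have "(3/2 * \<nu>)^2 \<le> (a * s)^2" by simp
        hence "9/4 * (\<nu> * \<nu>) \<le> (a * s) * (a * s)" by (simp add: power2_eq_square)
        moreover have "(a * s) * (a * s) < 2 * (\<nu> * \<nu>)" using h by (simp add: power2_eq_square)
        moreover have "\<nu> * \<nu> > 0" using nu by simp
        ultimately show False by linarith
      qed
    qed
    moreover have "a * (\<theta> - \<theta>m) = a * t + a * s" by (simp add: s_def t_def algebra_simps)
    ultimately show ?thesis using at nu by linarith
  next
    case False
    then obtain x1 where x1: "x1 \<in> {\<theta>m..p}" "f1 x1 \<le> -\<nu>" by force
    have sub: "{\<theta>m..p} \<subseteq> {L..\<theta>}" using tmL ord by auto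
    have c1s: "continuous_on {\<theta>m..p} f1" using continuous_on_subset[OF c1 sub] .
    obtain y0 where y0: "y0 \<in> {\<theta>m..p}" "f1 y0 \<le> -\<nu>" "\<forall>y\<in>{\<theta>m..p}. y > y0 \<longrightarrow> f1 y > -\<nu>"
      using max_closed[OF c1s x1] by blast
    have y0p: "y0 < p" using y0 f1p nu by (metis atLeastAtMost_iff order_le_less not_le neg_less_0_iff_less)
    have f1y0: "f1 y0 = -\<nu>"
    proof (rule ccontr)
      assume "f1 y0 \<noteq> -\<nu>" hence "f1 y0 < -\<nu>" using y0 by simp
      from cont_push_right[OF c1s y0(1) y0p this] y0(3) show False by force
    qed
    have sub2: "{y0..p} \<subseteq> {L..\<theta>}" using y0 sub by auto
    have f1b: "\<forall>x\<in>{y0..p}. \<bar>f1 x\<bar> \<le> \<nu>"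
    proof
      fix x assume x: "x \<in> {y0..p}"
      have "f1 x \<le> 0" using neg x y0 tmL by auto
      moreover have "f1 x \<ge> -\<nu>"
      proof (cases "x = y0")
        case True thus ?thesis using f1y0 by simp
      next
        case False hence "y0 < x" using x by simp
        moreover have "x \<in> {\<theta>m..p}" using x y0 by auto
        ultimately show ?thesis using y0(3) by fastforce
      qed
      ultimately show "\<bar>f1 x\<bar> \<le> \<nu>" by simp
    qed
    have sp: "\<forall>x\<in>{y0..p}. f2 x > 0"
    proof (rule sign_const[of y0 p f2 p])
      show "continuous_on {y0..p} f2" using continuous_on_subset[OF c2 sub2] .
      show "\<forall>x\<in>{y0..p}. f2 x \<noteq> 0"
      proof
        fix x assume x: "x \<in> {y0..p}"
        have "\<bar>f2 x\<bar> \<ge> a" using nz f1b sub2 x by blast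
        thus "f2 x \<noteq> 0" using a nu by auto
      qed
      show "p \<in> {y0..p}" using y0p by simp
      show "0 < f2 p" using f2p a nu by simp
    qed
    have f2a: "\<forall>x\<in>{y0..p}. f2 x \<ge> a"
    proof
      fix x assume x: "x \<in> {y0..p}"
      show "f2 x \<ge> a" using nzp[of x] sp f1b sub2 x by blast
    qed
    define u where "u = p - y0"
    have tay: "f y0 \<ge> f p + a * u^2 / 2"
      unfolding u_def by (rule taylor_left[OF C _ sub2 f1p f2a]) (use y0p in simp)
    have "f1 p - f1 y0 \<ge> a * (p - y0)"
      by (rule incr_ge[OF D2]) (use y0p sub2 f2a in auto)
    hence au: "a * u \<le> \<nu>" using f1p f1y0 by (simp add: u_def)
    have "\<exists>w1\<in>{\<theta>m..y0}. (\<forall>x\<in>{w1..y0}. f1 x \<le> -\<nu>) \<and> a * (w1 - \<theta>m) \<le> \<nu> \<and> f \<theta>m \<ge> f w1"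
    proof (cases "\<forall>x\<in>{\<theta>m..y0}. f1 x \<le> -\<nu>")
      case True
      thus ?thesis using y0 nu by (intro bexI[of _ \<theta>m]) auto
    next
      case False
      then obtain z where z: "z \<in> {\<theta>m..y0}" "f1 z > -\<nu>" by force
      have sub3: "{\<theta>m..y0} \<subseteq> {L..\<theta>}" using y0 sub by auto
      have c1y: "continuous_on {\<theta>m..y0} f1" using continuous_on_subset[OF c1 sub3] .
      have claim: "\<forall>x\<in>{\<theta>m..z'}. f1 x > -\<nu>" if z': "z' \<in> {\<theta>m..y0}" "f1 z' > -\<nu>" for z'
      proof (rule ccontr)
        assume "\<not> (\<forall>x\<in>{\<theta>m..z'}. f1 x > -\<nu>)"
        then obtain x where x: "x \<in> {\<theta>m..z'}" "f1 x \<le> -\<nu>" by force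
        have sa: "{\<theta>m..z'} \<subseteq> {\<theta>m..y0}" using z' by auto
        obtain x1 where x1: "x1 \<in> {\<theta>m..z'}" "f1 x1 \<le> -\<nu>" "\<forall>y\<in>{\<theta>m..z'}. y > x1 \<longrightarrow> f1 y > -\<nu>"
          using max_closed[OF continuous_on_subset[OF c1y sa] x] by blast
        have x1z: "x1 < z'" using x1 z' by (metis atLeastAtMost_iff order_le_less not_le)
        have f1x1: "f1 x1 = -\<nu>"
        proof (rule ccontr)
          assume "f1 x1 \<noteq> -\<nu>" hence "f1 x1 < -\<nu>" using x1 by simp
          from cont_push_right[OF continuous_on_subset[OF c1y sa] x1(1) x1z this] x1(3) show False by force
        qed
        have sb: "{z'..y0} \<subseteq> {\<theta>m..y0}" using z' by auto
        obtain w where w: "w \<in> {z'..y0}" "f1 w \<le> -\<nu>" "\<forall>y\<in>{z'..y0}. y < w \<longrightarrow> f1 y > -\<nu>"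
          using min_closed[OF continuous_on_subset[OF c1y sb], of y0 "-\<nu>"] z' y0 by auto
        have zw: "z' < w" using w z' by (metis atLeastAtMost_iff order_le_less not_le)
        have f1w: "f1 w = -\<nu>"
        proof (rule ccontr)
          assume "f1 w \<noteq> -\<nu>" hence "f1 w < -\<nu>" using w by simp
          from cont_push_left[OF continuous_on_subset[OF c1y sb] w(1) zw this] w(3) show False by force
        qed
        have sc: "{x1..w} \<subseteq> {L..\<theta>}" using x1 w sub3 by auto
        have f1b: "\<forall>x\<in>{x1..w}. \<bar>f1 x\<bar> \<le> \<nu>"
        proof
          fix x assume x: "x \<in> {x1..w}"
          have "f1 x \<le> 0" using neg x sc x1 w y0 tmL by auto
          moreover have "f1 x \<ge> -\<nu>"
          proof (cases "x \<le> z'")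
            case True
            show ?thesis
            proof (cases "x = x1")
              case True thus ?thesis using f1x1 by simp
            next
              case False
              hence "x1 < x" using x by simp
              moreover have "x \<in> {\<theta>m..z'}" using x x1 True by auto
              ultimately show ?thesis using x1(3) by fastforce
            qed
          next
            case False
            show ?thesis
            proof (cases "x = w")
              case True thus ?thesis using f1w by simp
            next
              case F2: False
              hence "x < w" using x by simp
              moreover have "x \<in> {z'..y0}" using x w False by auto
              ultimately show ?thesis using w(3) by fastforce
            qed
          qed
          ultimately show "\<bar>f1 x\<bar> \<le> \<nu>" by simp
        qed
        have nz2: "\<forall>x\<in>{x1..w}. f2 x \<noteq> 0" using f1b nz0 sc by blast
        obtain \<xi> where \<xi>: "\<xi> \<in> {x1..z'}" "f1 z' - f1 x1 = f2 \<xi> * (z' - x1)"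
          using mvt1[OF D2, of x1 z'] x1z sc zw by auto
        have "f2 \<xi> * (z' - x1) > 0" using \<xi> z' f1x1 by simp
        hence "f2 \<xi> > 0" using x1z by (simp add: zero_less_mult_iff)
        hence allp: "\<forall>x\<in>{x1..w}. f2 x > 0"
          by (intro sign_const[of x1 w f2 \<xi>]) (use continuous_on_subset[OF c2 sc] nz2 \<xi> zw in auto)
        obtain \<xi>' where \<xi>': "\<xi>' \<in> {z'..w}" "f1 w - f1 z' = f2 \<xi>' * (w - z')"
          using mvt1[OF D2, of z' w] x1z sc zw by auto
        have "f2 \<xi>' * (w - z') < 0" using \<xi>' z' f1w by simp
        hence "f2 \<xi>' < 0" using zw by (simp add: mult_less_0_iff)
        moreover have "\<xi>' \<in> {x1..w}" using \<xi>' x1z by auto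
        ultimately show False using allp by fastforce
      qed
      have sb: "{z..y0} \<subseteq> {\<theta>m..y0}" using z by auto
      obtain w1 where w1: "w1 \<in> {z..y0}" "f1 w1 \<le> -\<nu>" "\<forall>y\<in>{z..y0}. y < w1 \<longrightarrow> f1 y > -\<nu>"
        using min_closed[OF continuous_on_subset[OF c1y sb], of y0 "-\<nu>"] z y0 by auto
      have zw: "z < w1" using w1 z by (metis atLeastAtMost_iff order_le_less not_le)
      have f1w: "f1 w1 = -\<nu>"
      proof (rule ccontr)
        assume "f1 w1 \<noteq> -\<nu>" hence "f1 w1 < -\<nu>" using w1 by simp
        from cont_push_left[OF continuous_on_subset[OF c1y sb] w1(1) zw this] w1(3) show False by force
      qed
      have right: "\<forall>x\<in>{w1..y0}. f1 x \<le> -\<nu>"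
      proof (rule ballI, rule ccontr)
        fix x assume x: "x \<in> {w1..y0}" "\<not> f1 x \<le> -\<nu>"
        have "x \<in> {\<theta>m..y0}" using x w1 z by auto
        from claim[OF this] x(2) have "\<forall>y\<in>{\<theta>m..x}. f1 y > -\<nu>" by simp
        moreover have "w1 \<in> {\<theta>m..x}" using x w1 z by auto
        ultimately show False using f1w by force
      qed
      have sc: "{\<theta>m..w1} \<subseteq> {L..\<theta>}" using w1 sub3 by auto
      have f1b: "\<forall>x\<in>{\<theta>m..w1}. \<bar>f1 x\<bar> \<le> \<nu>"
      proof
        fix x assume x: "x \<in> {\<theta>m..w1}"
        have "f1 x \<le> 0" using neg x sc w1 y0 tmL by auto
        moreover have "f1 x \<ge> -\<nu>"
        proof (cases "x \<le> z")
          case True thus ?thesis using claim[OF z(1) z(2)] x by force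
        next
          case False
          show ?thesis
          proof (cases "x = w1")
            case True thus ?thesis using f1w by simp
          next
            case F2: False
            hence "x < w1" using x by simp
            moreover have "x \<in> {z..y0}" using x w1 False by auto
            ultimately show ?thesis using w1(3) by fastforce
          qed
        qed
        ultimately show "\<bar>f1 x\<bar> \<le> \<nu>" by simp
      qed
      have nz2: "\<forall>x\<in>{\<theta>m..w1}. - f2 x \<noteq> 0" using f1b nz0 sc by fastforce
      obtain \<xi>' where \<xi>': "\<xi>' \<in> {z..w1}" "f1 w1 - f1 z = f2 \<xi>' * (w1 - z)"
        using mvt1[OF D2, of z w1] sc zw z by auto
      have "f2 \<xi>' * (w1 - z) < 0" using \<xi>' z f1w by simp
      hence "f2 \<xi>' < 0" using zw by (simp add: mult_less_0_iff)
      hence alln: "\<forall>x\<in>{\<theta>m..w1}. - f2 x > 0"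
        by (intro sign_const[of \<theta>m w1 "\<lambda>x. - f2 x" \<xi>']) 
           (use continuous_on_minus[OF continuous_on_subset[OF c2 sc]] nz2 \<xi>' z in auto)
      have f2le: "\<forall>x\<in>{\<theta>m..w1}. f2 x \<le> -a"
      proof
        fix x assume x: "x \<in> {\<theta>m..w1}"
        show "f2 x \<le> -a" using nzn[of x] alln f1b sc x by fastforce
      qed
      have "f1 w1 - f1 \<theta>m \<le> (-a) * (w1 - \<theta>m)"
        by (rule incr_le[OF D2]) (use sc f2le w1 z in auto)
      moreover have "f1 \<theta>m \<le> 0" using neg tm by auto
      ultimately have aw: "a * (w1 - \<theta>m) \<le> \<nu>" using f1w by simp
      have "f w1 - f \<theta>m \<le> 0 * (w1 - \<theta>m)"
        by (rule incr_le[OF D1]) (use sc f1b neg w1 z y0 tmL in auto)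
      hence "f \<theta>m \<ge> f w1" by simp
      thus ?thesis using w1 z aw right by (intro bexI[of _ w1]) auto
    qed
    then obtain w1 where w1: "w1 \<in> {\<theta>m..y0}" "\<forall>x\<in>{w1..y0}. f1 x \<le> -\<nu>" "a * (w1 - \<theta>m) \<le> \<nu>" "f \<theta>m \<ge> f w1"
      by blast
    have "f y0 - f w1 \<le> (-\<nu>) * (y0 - w1)"
      by (rule incr_le[OF D1]) (use w1 sub y0 in auto)
    hence key: "\<nu> * (y0 - w1) \<le> \<nu> * t - a * u^2 / 2" using tay ft tm w1 by simp
    have "\<nu> * (a * (y0 - w1)) \<le> \<nu> * (a * t) - (a * u)^2 / 2"
      using mult_left_mono[OF key, of a] a nu by (simp add: algebra_simps power2_eq_square)
    also have "\<dots> \<le> \<nu> * (a * t) - (\<nu> * (a * u) - \<nu>^2 / 2)"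
    proof -
      have "0 \<le> (a * u - \<nu>)^2" by simp
      hence "\<nu> * (a * u) - \<nu>^2 / 2 \<le> (a * u)^2 / 2" by (simp add: power2_eq_square algebra_simps)
      thus ?thesis by linarith
    qed
    finally have "\<nu> * (a * (y0 - w1)) \<le> \<nu> * (a * t - a * u + \<nu> / 2)"
      by (simp add: algebra_simps power2_eq_square)
    hence "a * (y0 - w1) \<le> a * t - a * u + \<nu> / 2" using nu by simp
    hence "a * (\<theta> - \<theta>m) = a * t + a * u + a * (y0 - w1) + a * (w1 - \<theta>m)"
      "a * (y0 - w1) \<le> a * t - a * u + \<nu> / 2"
      by (auto simp: t_def u_def algebra_simps)
    thus ?thesis using at w1(3) by linarith
  qed
  have ge: "\<theta> - \<theta>m \<ge> 0" using tmL ord by simp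
  have "d * (\<theta> - \<theta>m) \<le> 2 * a * (\<theta> - \<theta>m)" using a ge by (simp add: mult_right_mono)
  also have "\<dots> < 7 * \<nu>" using goal by simp
  finally have "d * (\<theta> - \<theta>m) < 7 * \<nu>" .
  thus ?thesis using nu by (simp add: field_simps)
qed


lemma C2on_nr: "C2on f f1 f2 {a..b} \<Longrightarrow> C2on (\<lambda>x. - f (-x)) (\<lambda>x. f1 (-x)) (\<lambda>x. - f2 (-x)) {-b..-a}"
  using C2on_neg[OF C2on_refl[of f f1 f2 "{a..b}"]] by simp

lemma C2on_r: "C2on f f1 f2 {a..b} \<Longrightarrow> C2on (\<lambda>x. f (-x)) (\<lambda>x. - f1 (-x)) (\<lambda>x. f2 (-x)) {-b..-a}"
  using C2on_refl[of f f1 f2 "{a..b}"] by simp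

lemma neg_iv: "x \<in> {-b..-a} \<longleftrightarrow> -x \<in> {a..(b::real)}" by auto

lemma lemA_Pm:
  assumes C: "C2on f f1 f2 {\<theta>..q}" and q: "\<theta> \<le> q" and pos: "\<forall>x\<in>{\<theta>..q}. f1 x \<ge> 0"
    and bnd: "\<forall>x\<in>{\<theta>..q}. d \<le> \<bar>f1 x\<bar> + \<bar>f2 x\<bar>"
    and th: "f1 \<theta> < \<nu>" "f2 \<theta> < 0" and nu: "0 < \<nu>" "\<nu> < d/2"
  shows "f1 q \<le> f1 \<theta>"
proof -
  have "\<forall>x\<in>{-q..-\<theta>}. - f2 (-x) \<ge> d - \<nu> \<and> f1 (-x) \<le> f1 (- (-\<theta>))"
    by (rule lemA[OF C2on_nr[OF C]]) (use q pos bnd th nu in \<open>auto simp: neg_iv\<close>)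
  moreover have "-q \<in> {-q..-\<theta>}" using q by simp
  ultimately show ?thesis by fastforce
qed

lemma lemA_Mp:
  assumes C: "C2on f f1 f2 {\<theta>..q}" and q: "\<theta> \<le> q" and neg: "\<forall>x\<in>{\<theta>..q}. f1 x \<le> 0"
    and bnd: "\<forall>x\<in>{\<theta>..q}. d \<le> \<bar>f1 x\<bar> + \<bar>f2 x\<bar>"
    and th: "- f1 \<theta> < \<nu>" "f2 \<theta> > 0" and nu: "0 < \<nu>" "\<nu> < d/2"
  shows "f1 q \<ge> f1 \<theta>"
proof -
  have "\<forall>x\<in>{-q..-\<theta>}. f2 (-x) \<ge> d - \<nu> \<and> - f1 (-x) \<le> - f1 (- (-\<theta>))"
    by (rule lemA[OF C2on_r[OF C]]) (use q neg bnd th nu in \<open>auto simp: neg_iv\<close>)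
  moreover have "-q \<in> {-q..-\<theta>}" using q by simp
  ultimately show ?thesis by fastforce
qed

lemma lemA_Mm:
  assumes C: "C2on f f1 f2 {q..\<theta>}" and q: "q \<le> \<theta>" and neg: "\<forall>x\<in>{q..\<theta>}. f1 x \<le> 0"
    and bnd: "\<forall>x\<in>{q..\<theta>}. d \<le> \<bar>f1 x\<bar> + \<bar>f2 x\<bar>"
    and th: "- f1 \<theta> < \<nu>" "f2 \<theta> < 0" and nu: "0 < \<nu>" "\<nu> < d/2"
  shows "f1 q \<ge> f1 \<theta>"
proof -
  have "\<forall>x\<in>{q..\<theta>}. - f2 x \<ge> d - \<nu> \<and> - f1 x \<le> - f1 \<theta>"
    by (rule lemA[OF C2on_neg[OF C]]) (use q neg bnd th nu in auto)
  thus ?thesis using q by auto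
qed

lemma lemA_Pp:
  assumes C: "C2on f f1 f2 {q..\<theta>}" and q: "q \<le> \<theta>" and pos: "\<forall>x\<in>{q..\<theta>}. f1 x \<ge> 0"
    and bnd: "\<forall>x\<in>{q..\<theta>}. d \<le> \<bar>f1 x\<bar> + \<bar>f2 x\<bar>"
    and th: "f1 \<theta> < \<nu>" "f2 \<theta> > 0" and nu: "0 < \<nu>" "\<nu> < d/2"
  shows "f1 q \<le> f1 \<theta>"
  using lemA[OF C q pos bnd th nu] q by auto

lemma lemB_Pm:
  assumes C: "C2on f f1 f2 {\<theta>..R}" and ord: "\<theta> \<le> p" "p \<le> R"
   and pos: "\<forall>x\<in>{\<theta>..p}. f1 x \<ge> 0" and neg: "\<forall>x\<in>{p..R}. f1 x \<le> 0"
   and bnd: "\<forall>x\<in>{\<theta>..R}. d \<le> \<bar>f1 x\<bar> + \<bar>f2 x\<bar>"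
   and th: "f1 \<theta> < \<nu>" "f2 \<theta> < 0" and nu: "0 < \<nu>" "\<nu> < d/2"
   and tm: "\<theta>m \<in> {p..R}" "f \<theta>m = f \<theta>"
  shows "\<theta>m - \<theta> < 7 * \<nu> / d"
proof -
  have "- \<theta> - - \<theta>m < 7 * \<nu> / d"
    by (rule lemB[OF C2on_nr[OF C], where p="-p" and \<theta>m="-\<theta>m" and d=d and \<nu>=\<nu>])
       (use ord pos neg bnd th nu tm in \<open>auto simp: neg_iv\<close>)
  thus ?thesis by simp
qed

lemma lemB_Mp:
  assumes C: "C2on f f1 f2 {\<theta>..R}" and ord: "\<theta> \<le> p" "p \<le> R"
   and neg: "\<forall>x\<in>{\<theta>..p}. f1 x \<le> 0" and pos: "\<forall>x\<in>{p..R}. f1 x \<ge> 0"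
   and bnd: "\<forall>x\<in>{\<theta>..R}. d \<le> \<bar>f1 x\<bar> + \<bar>f2 x\<bar>"
   and th: "- f1 \<theta> < \<nu>" "f2 \<theta> > 0" and nu: "0 < \<nu>" "\<nu> < d/2"
   and tm: "\<theta>p \<in> {p..R}" "f \<theta>p = f \<theta>"
  shows "\<theta>p - \<theta> < 7 * \<nu> / d"
proof -
  have "- \<theta> - - \<theta>p < 7 * \<nu> / d"
    by (rule lemB[OF C2on_r[OF C], where p="-p" and \<theta>m="-\<theta>p" and d=d and \<nu>=\<nu>])
       (use ord pos neg bnd th nu tm in \<open>auto simp: neg_iv\<close>)
  thus ?thesis by simp
qed

lemma lemB_Mm:
  assumes C: "C2on f f1 f2 {L..\<theta>}" and ord: "L \<le> p" "p \<le> \<theta>"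
   and pos: "\<forall>x\<in>{L..p}. f1 x \<ge> 0" and neg: "\<forall>x\<in>{p..\<theta>}. f1 x \<le> 0"
   and bnd: "\<forall>x\<in>{L..\<theta>}. d \<le> \<bar>f1 x\<bar> + \<bar>f2 x\<bar>"
   and th: "- f1 \<theta> < \<nu>" "f2 \<theta> < 0" and nu: "0 < \<nu>" "\<nu> < d/2"
   and tm: "\<theta>p \<in> {L..p}" "f \<theta>p = f \<theta>"
  shows "\<theta> - \<theta>p < 7 * \<nu> / d"
  by (rule lemB[OF C2on_neg[OF C] ord, where \<theta>m="\<theta>p" and d=d and \<nu>=\<nu>])
     (use ord pos neg bnd th nu tm in auto)



lemma per_int:
  assumes per: "\<forall>x. f (x + 1) = f (x::real)"
  shows "f (x + of_int k) = f x"
proof (induction k rule: int_induct[where k=0])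
  case base thus ?case by simp
next
  case (step1 i)
  have "f (x + of_int (i + 1)) = f ((x + of_int i) + 1)" by (simp add: algebra_simps)
  thus ?case using per step1 by simp
next
  case (step2 i)
  have "f (x + of_int (i - 1)) = f ((x + of_int (i - 1)) + 1)" using per by metis
  also have "(x + of_int (i - 1)) + 1 = x + of_int i" by simp
  finally show ?case using step2 by simp
qed

lemma nonbot_Icc: "(a::real) < b \<Longrightarrow> x \<in> {a..b} \<Longrightarrow> at x within {a..b} \<noteq> bot"
  using trivial_limit_within[of x "{a..b}"] islimpt_Icc[of a b x] by (simp add: trivial_limit_def)

lemma deriv_shift:
  assumes D: "\<forall>x\<in>S. (f has_real_derivative f' x) (at x within S)"
    and per: "\<forall>x. f (x + 1) = f x"
    and sub: "{a..b} \<subseteq> S" "{a + of_int k..b + of_int k} \<subseteq> S" and ab: "a < b" and x: "x \<in> {a..b}"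
  shows "f' (x + of_int k) = f' x"
proof -
  have h1: "(f has_real_derivative f' x) (at x within {a..b})"
    using D sub x has_field_derivative_subset by blast
  have xk: "x + of_int k \<in> {a + of_int k..b + of_int k}" using x by auto
  have img: "(\<lambda>y. y + of_int k) ` {a..b} = {a + of_int k..b + of_int k}" by simp
  have h2: "(f has_real_derivative f' (x + of_int k)) (at ((\<lambda>y. y + of_int k) x) within (\<lambda>y. y + of_int k) ` {a..b})"
    using D sub xk has_field_derivative_subset img by (metis subsetD)
  have g: "((\<lambda>y. y + of_int k) has_real_derivative 1) (at x within {a..b})"
    by (auto intro!: derivative_eq_intros)
  have "(f \<circ> (\<lambda>y. y + of_int k) has_real_derivative f' (x + of_int k) * 1) (at x within {a..b})"
    by (rule DERIV_image_chain[OF h2 g])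
  moreover have "f \<circ> (\<lambda>y. y + of_int k) = f" using per_int[OF per] by (auto simp: o_def)
  ultimately have h3: "(f has_real_derivative f' (x + of_int k)) (at x within {a..b})" by simp
  show ?thesis using has_field_derivative_unique[OF h3 h1 nonbot_Icc[OF ab x]] .
qed


lemma const_deriv_zero:
  assumes h: "(g has_real_derivative D) (at z within {a..b})" and ab: "a < b" "z \<in> {a..b}"
    and c: "\<forall>w\<in>{a..b}. g w = c"
  shows "D = 0"
proof -
  have "((\<lambda>_. c) has_real_derivative 0) (at z within {a..b})" by simp
  hence "(g has_real_derivative 0) (at z within {a..b})"
    by (rule has_field_derivative_transform_within[of _ _ _ _ 1]) (use ab c in auto)
  from has_field_derivative_unique[OF h this nonbot_Icc[OF ab]] show ?thesis .
qed

lemma strict_incr: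
  assumes C: "C2on f f1 f2 {lo..hi}" and pos: "\<forall>x\<in>{lo..hi}. f1 x \<ge> 0"
    and bnd: "\<forall>x\<in>{lo..hi}. d \<le> \<bar>f1 x\<bar> + \<bar>f2 x\<bar>" and d: "d > 0"
    and xy: "x \<in> {lo..hi}" "y \<in> {lo..hi}" "x < y"
  shows "f x < f y"
proof -
  have D1: "\<forall>x\<in>{lo..hi}. (f has_real_derivative f1 x) (at x within {lo..hi})"
   and D2: "\<forall>x\<in>{lo..hi}. (f1 has_real_derivative f2 x) (at x within {lo..hi})"
    using C unfolding C2on_def by auto
  have mono: "\<And>u v. u \<in> {lo..hi} \<Longrightarrow> v \<in> {lo..hi} \<Longrightarrow> u \<le> v \<Longrightarrow> f u \<le> f v"
  proof -
    fix u v assume uv: "u \<in> {lo..hi}" "v \<in> {lo..hi}" "u \<le> v"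
    have "f v - f u \<ge> 0 * (v - u)" by (rule incr_ge[OF D1]) (use uv pos in auto)
    thus "f u \<le> f v" by simp
  qed
  show ?thesis
  proof (rule ccontr)
    assume "\<not> f x < f y"
    hence eq: "f x = f y" using mono xy by force
    have cst: "\<forall>w\<in>{x..y}. f w = f x"
    proof
      fix w assume w: "w \<in> {x..y}"
      have "f x \<le> f w" "f w \<le> f y" using mono xy w by auto
      thus "f w = f x" using eq by simp
    qed
    have sxy: "{x..y} \<subseteq> {lo..hi}" using xy by auto
    have f10: "f1 z = 0" if z: "z \<in> {x..y}" for z
      by (rule const_deriv_zero[OF has_field_derivative_subset[OF D1[rule_format] sxy] xy(3) z cst])
         (use z sxy in auto)
    define m where "m = (x + y) / 2"
    define x1 where "x1 = (x + m) / 2"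
    define y1 where "y1 = (m + y) / 2"
    have s1: "{x1..y1} \<subseteq> {x..y}" "x1 < y1" "m \<in> {x1..y1}" using xy by (auto simp: x1_def y1_def m_def)
    have "f2 m = 0"
      by (rule const_deriv_zero[OF has_field_derivative_subset[OF D2[rule_format]] s1(2) s1(3)])
         (use s1 sxy f10 in auto)
    moreover have "f1 m = 0" using f10 s1 by auto
    moreover have "m \<in> {lo..hi}" using s1 sxy by blast
    ultimately show False using bnd d by fastforce
  qed
qed

lemma strict_decr:
  assumes C: "C2on f f1 f2 {lo..hi}" and neg: "\<forall>x\<in>{lo..hi}. f1 x \<le> 0"
    and bnd: "\<forall>x\<in>{lo..hi}. d \<le> \<bar>f1 x\<bar> + \<bar>f2 x\<bar>" and d: "d > 0"
    and xy: "x \<in> {lo..hi}" "y \<in> {lo..hi}" "x < y"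
  shows "f x > f y"
  using strict_incr[OF C2on_neg[OF C] _ _ d xy] neg bnd by auto



lemma memS: "x \<in> circ_lift A \<longleftrightarrow> (\<exists>k::int. x - of_int k \<in> A)"
  by (simp add: circ_lift_def)

lemma adjL:
  fixes a1 b1 a2 b2 :: real
  assumes ab: "a1 < b1" "a2 < b2" "b2 - a2 < 1"
    and disj: "\<forall>x\<in>{a1<..<b1}. \<forall>y\<in>{a2<..<b2}. x - y \<notin> \<int>"
    and int: "a2 \<in> interior (circ_lift ({a1..b1} \<union> {a2..b2}))"
  shows "\<exists>k::int. a2 = b1 + of_int k"
proof -
  obtain \<delta> where \<delta>: "\<delta> > 0" "ball a2 \<delta> \<subseteq> circ_lift ({a1..b1} \<union> {a2..b2})"
    using int mem_interior by blast
  define k0 where "k0 = \<lceil>a2 - b1\<rceil>"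
  have k0: "a2 \<le> b1 + of_int k0" "b1 + of_int k0 - 1 < a2"
    unfolding k0_def using ceiling_correct[of "a2 - b1"] by linarith+
  show ?thesis
  proof (cases "a1 + of_int k0 \<le> a2")
    case True
    show ?thesis
    proof (cases "a2 = b1 + of_int k0")
      case True thus ?thesis by blast
    next
      case False
      hence lt: "a2 < b1 + of_int k0" using k0 by simp
      define mm where "mm = min (b1 + of_int k0 - a2) (b2 - a2)"
      have mm: "mm > 0" "mm \<le> b1 + of_int k0 - a2" "mm \<le> b2 - a2" using lt ab by (auto simp: mm_def)
      define y where "y = a2 + mm / 2"
      have "a2 < y" "y < b2" "a1 < y - of_int k0" "y - of_int k0 < b1" using mm True unfolding y_def by linarith+
      hence y: "y \<in> {a2<..<b2}" "y - of_int k0 \<in> {a1<..<b1}" by auto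
      have "(y - of_int k0) - y \<in> \<int>" by simp
      thus ?thesis using disj y by blast
    qed
  next
    case False
    define \<epsilon> where "\<epsilon> = min \<delta> (min (a2 - (b1 + of_int k0 - 1)) (a2 - (b2 - 1))) / 2"
    have \<epsilon>: "\<epsilon> > 0" "\<epsilon> < \<delta>" "\<epsilon> < a2 - (b1 + of_int k0 - 1)" "\<epsilon> < a2 - (b2 - 1)"
      using \<delta> k0 ab unfolding \<epsilon>_def by (auto simp: min_def)
    define x where "x = a2 - \<epsilon>"
    have "x \<in> ball a2 \<delta>" using \<epsilon> by (simp add: x_def dist_real_def)
    hence "x \<in> circ_lift ({a1..b1} \<union> {a2..b2})" using \<delta> by blast
    then obtain k :: int where k: "x - of_int k \<in> {a1..b1} \<union> {a2..b2}" unfolding memS by blast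
    show ?thesis
    proof (cases "x - of_int k \<in> {a1..b1}")
      case True
      show ?thesis
      proof (cases "k \<le> k0 - 1")
        case True
        hence "of_int k \<le> (of_int k0 - 1 :: real)" by linarith
        thus ?thesis using \<open>x - of_int k \<in> {a1..b1}\<close> \<epsilon> by (auto simp: x_def)
      next
        case False
        hence "of_int k \<ge> (of_int k0 :: real)" by linarith
        thus ?thesis using \<open>x - of_int k \<in> {a1..b1}\<close> \<epsilon> \<open>\<not> a1 + of_int k0 \<le> a2\<close> by (auto simp: x_def)
      qed
    next
      case F2: False
      hence kk: "x - of_int k \<in> {a2..b2}" using k by blast
      show ?thesis
      proof (cases "k \<ge> 0")
        case True
        hence "of_int k \<ge> (0 :: real)" by linarith
        thus ?thesis using kk \<epsilon> by (auto simp: x_def)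
      next
        case False
        hence "of_int k \<le> (-1 :: real)" by linarith
        thus ?thesis using kk \<epsilon> by (auto simp: x_def)
      qed
    qed
  qed
qed

lemma adjR:
  fixes a1 b1 a2 b2 :: real
  assumes ab: "a1 < b1" "a2 < b2" "b2 - a2 < 1"
    and disj: "\<forall>x\<in>{a1<..<b1}. \<forall>y\<in>{a2<..<b2}. x - y \<notin> \<int>"
    and int: "b2 \<in> interior (circ_lift ({a1..b1} \<union> {a2..b2}))"
  shows "\<exists>k::int. b2 = a1 + of_int k"
proof -
  obtain \<delta> where \<delta>: "\<delta> > 0" "ball b2 \<delta> \<subseteq> circ_lift ({a1..b1} \<union> {a2..b2})"
    using int mem_interior by blast
  define k0 where "k0 = \<lfloor>b2 - a1\<rfloor>"
  have k0: "a1 + of_int k0 \<le> b2" "b2 < a1 + of_int k0 + 1"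
    unfolding k0_def using floor_correct[of "b2 - a1"] by linarith+
  show ?thesis
  proof (cases "b2 \<le> b1 + of_int k0")
    case True
    show ?thesis
    proof (cases "b2 = a1 + of_int k0")
      case True thus ?thesis by blast
    next
      case False
      hence lt: "a1 + of_int k0 < b2" using k0 by simp
      define mm where "mm = min (b2 - (a1 + of_int k0)) (b2 - a2)"
      have mm: "mm > 0" "mm \<le> b2 - (a1 + of_int k0)" "mm \<le> b2 - a2" using lt ab by (auto simp: mm_def)
      define y where "y = b2 - mm / 2"
      have "a2 < y" "y < b2" "a1 < y - of_int k0" "y - of_int k0 < b1" using mm True unfolding y_def by linarith+
      hence y: "y \<in> {a2<..<b2}" "y - of_int k0 \<in> {a1<..<b1}" by auto
      have "(y - of_int k0) - y \<in> \<int>" by simp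
      thus ?thesis using disj y by blast
    qed
  next
    case False
    define \<epsilon> where "\<epsilon> = min \<delta> (min (a1 + of_int k0 + 1 - b2) (a2 + 1 - b2)) / 2"
    have \<epsilon>: "\<epsilon> > 0" "\<epsilon> < \<delta>" "\<epsilon> < a1 + of_int k0 + 1 - b2" "\<epsilon> < a2 + 1 - b2"
      using \<delta> k0 ab unfolding \<epsilon>_def by (auto simp: min_def)
    define x where "x = b2 + \<epsilon>"
    have "x \<in> ball b2 \<delta>" using \<epsilon> by (simp add: x_def dist_real_def)
    hence "x \<in> circ_lift ({a1..b1} \<union> {a2..b2})" using \<delta> by blast
    then obtain k :: int where k: "x - of_int k \<in> {a1..b1} \<union> {a2..b2}" unfolding memS by blast
    show ?thesis
    proof (cases "x - of_int k \<in> {a1..b1}")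
      case True
      show ?thesis
      proof (cases "k \<le> k0")
        case True
        hence "of_int k \<le> (of_int k0 :: real)" by linarith
        thus ?thesis using \<open>x - of_int k \<in> {a1..b1}\<close> \<epsilon> \<open>\<not> b2 \<le> b1 + of_int k0\<close> by (auto simp: x_def)
      next
        case False
        hence "of_int k \<ge> (of_int k0 + 1 :: real)" by linarith
        thus ?thesis using \<open>x - of_int k \<in> {a1..b1}\<close> \<epsilon> by (auto simp: x_def)
      qed
    next
      case F2: False
      hence kk: "x - of_int k \<in> {a2..b2}" using k by blast
      show ?thesis
      proof (cases "k \<le> 0")
        case True
        hence "of_int k \<le> (0 :: real)" by linarith
        thus ?thesis using kk \<epsilon> by (auto simp: x_def)
      next
        case False
        hence "of_int k \<ge> (1 :: real)" by linarith
        thus ?thesis using kk \<epsilon> by (auto simp: x_def)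
      qed
    qed
  qed
qed


lemma int_between: "0 < (of_int (m::int) :: real) \<Longrightarrow> of_int m < (1::real) \<Longrightarrow> False"
proof -
  assume "0 < (of_int m :: real)" "of_int m < (1::real)"
  hence "0 < m" "m < 1" by (simp_all only: of_int_0_less_iff of_int_less_1_iff)
  thus False by simp
qed

lemma disc_frontier:
  fixes a1 a2 :: real
  assumes x: "x \<in> circ_lift ({a1..a1} \<union> {a2..a2})"
  shows "x \<in> frontier (circ_lift ({a1..a1} \<union> {a2..a2}))"
proof -
  let ?S = "circ_lift ({a1..a1} \<union> {a2..a2})"
  have "x \<notin> interior ?S"
  proof
    assume "x \<in> interior ?S"
    then obtain \<delta> where \<delta>: "\<delta> > 0" "ball x \<delta> \<subseteq> ?S" using mem_interior by blast
    define \<epsilon> where "\<epsilon> = min \<delta> 1"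
    have \<epsilon>: "\<epsilon> > 0" "\<epsilon> \<le> \<delta>" "\<epsilon> \<le> 1" using \<delta> by (auto simp: \<epsilon>_def)
    have mem: "x + of_nat i * \<epsilon> / 4 \<in> ?S" if "i \<le> 3" for i :: nat
    proof -
      have "real i \<le> 3" using that by simp
      hence "real i * \<epsilon> \<le> 3 * \<epsilon>" using \<epsilon> by (simp add: mult_right_mono)
      hence "of_nat i * \<epsilon> / 4 < \<epsilon>" using \<epsilon> by simp
      hence lt: "of_nat i * \<epsilon> / 4 < \<delta>" using \<epsilon> by linarith
      have ge: "0 \<le> of_nat i * \<epsilon> / 4" using \<epsilon> by simp
      have "dist x (x + of_nat i * \<epsilon> / 4) = of_nat i * \<epsilon> / 4" using ge by (simp add: dist_real_def)
      hence "x + of_nat i * \<epsilon> / 4 \<in> ball x \<delta>" using lt by simp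
      thus ?thesis using \<delta> by blast
    qed
    have ex: "\<exists>k::int. x + of_nat i * \<epsilon> / 4 - of_int k = a1 \<or> x + of_nat i * \<epsilon> / 4 - of_int k = a2"
      if "i \<le> 3" for i :: nat
      using mem[OF that] unfolding memS by auto
    obtain k1 :: int where k1: "x + \<epsilon> / 4 - of_int k1 = a1 \<or> x + \<epsilon> / 4 - of_int k1 = a2"
      using ex[of 1] by auto
    obtain k2 :: int where k2: "x + 2 * \<epsilon> / 4 - of_int k2 = a1 \<or> x + 2 * \<epsilon> / 4 - of_int k2 = a2"
      using ex[of 2] by auto
    obtain k3 :: int where k3: "x + 3 * \<epsilon> / 4 - of_int k3 = a1 \<or> x + 3 * \<epsilon> / 4 - of_int k3 = a2"
      using ex[of 3] by auto
    have c12: "of_int (k2 - k1) = \<epsilon> / 4" if "x + \<epsilon> / 4 - of_int k1 = x + 2 * \<epsilon> / 4 - of_int k2"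
      using that by simp
    have c13: "of_int (k3 - k1) = 2 * \<epsilon> / 4" if "x + \<epsilon> / 4 - of_int k1 = x + 3 * \<epsilon> / 4 - of_int k3"
      using that by simp
    have c23: "of_int (k3 - k2) = \<epsilon> / 4" if "x + 2 * \<epsilon> / 4 - of_int k2 = x + 3 * \<epsilon> / 4 - of_int k3"
      using that by simp
    have b1: "0 < \<epsilon> / 4" "\<epsilon> / 4 < 1" "0 < 2 * \<epsilon> / 4" "2 * \<epsilon> / 4 < 1" using \<epsilon> by auto
    show False
      using k1 k2 k3 c12 c13 c23 b1 int_between[of "k2 - k1"] int_between[of "k3 - k1"] int_between[of "k3 - k2"]
      by metis
  qed
  moreover have "x \<in> closure ?S" using x closure_subset by blast
  ultimately show ?thesis by (simp add: frontier_def)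
qed



theorem lemma4p3:
  fixes f f' f'' :: "real \<Rightarrow> real"
    and am bm ap bp c e d D \<nu> Estar \<theta>m \<theta>p :: real
  assumes Im: "am \<le> bm" "bm - am \<le> 1"
    and Ip: "ap \<le> bp" "bp - ap \<le> 1"
    and disj: "\<forall>x\<in>{am<..<bm}. \<forall>y\<in>{ap<..<bp}. x - y \<notin> \<int>"
    and J: "c \<le> e"
    and per: "\<forall>x. f (x + 1) = f x"
    and d1: "\<forall>x\<in>circ_lift ({am..bm} \<union> {ap..bp}).
               (f has_real_derivative f' x) (at x within circ_lift ({am..bm} \<union> {ap..bp}))"
    and d2: "\<forall>x\<in>circ_lift ({am..bm} \<union> {ap..bp}).
               (f' has_real_derivative f'' x) (at x within circ_lift ({am..bm} \<union> {ap..bp}))"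
    and d2c: "continuous_on (circ_lift ({am..bm} \<union> {ap..bp})) f''"
    and mono_m: "\<forall>x\<in>{am..bm}. f' x \<le> 0"
    and mono_p: "\<forall>x\<in>{ap..bp}. f' x \<ge> 0"
    and dD: "0 < d" "d \<le> D"
    and bnd: "\<forall>x\<in>circ_lift ({am..bm} \<union> {ap..bp}). d \<le> \<bar>f' x\<bar> + \<bar>f'' x\<bar> \<and> \<bar>f' x\<bar> + \<bar>f'' x\<bar> \<le> D"
    and onto_m: "f ` {am..bm} = {c..e}"
    and onto_p: "f ` {ap..bp} = {c..e}"
    and nu: "0 < \<nu>" "\<nu> < d / 2"
    and bdry: "\<forall>x\<in>frontier (circ_lift ({am..bm} \<union> {ap..bp})). \<nu> \<le> \<bar>f' x\<bar>"
    and E: "Estar \<in> {c..e}"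
    and th: "\<theta>m \<in> {am..bm}" "\<theta>p \<in> {ap..bp}"
    and Eeq: "Estar = f \<theta>m" "Estar = f \<theta>p"
    and big: "tnorm (Tf f am bm ap bp Estar) \<ge> 7 * \<nu> / d"
  shows "\<bar>f' \<theta>m\<bar> \<ge> \<nu> \<and> \<bar>f' \<theta>p\<bar> \<ge> \<nu>"
proof -
  define S where "S = circ_lift ({am..bm} \<union> {ap..bp})"
  have memS': "\<And>x. x \<in> S \<longleftrightarrow> (\<exists>k::int. x - of_int k \<in> {am..bm} \<union> {ap..bp})"
    unfolding S_def memS by simp
  have shm: "{am + of_int k..bm + of_int k} \<subseteq> S" for k :: int
  proof
    fix x assume "x \<in> {am + of_int k..bm + of_int k}"
    hence "x - of_int k \<in> {am..bm} \<union> {ap..bp}" by auto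
    thus "x \<in> S" unfolding memS' by blast
  qed
  have shp: "{ap + of_int k..bp + of_int k} \<subseteq> S" for k :: int
  proof
    fix x assume "x \<in> {ap + of_int k..bp + of_int k}"
    hence "x - of_int k \<in> {am..bm} \<union> {ap..bp}" by auto
    thus "x \<in> S" unfolding memS' by blast
  qed
  have subm: "{am..bm} \<subseteq> S" using shm[of 0] by simp
  have subp: "{ap..bp} \<subseteq> S" using shp[of 0] by simp
  have C2S: "C2on f f' f'' U" if "U \<subseteq> S" for U
  proof -
    have "C2on f f' f'' S" unfolding C2on_def using d1 d2 d2c by (simp add: S_def)
    thus ?thesis using C2on_subset that by blast
  qed
  have bndS: "\<forall>x\<in>S. d \<le> \<bar>f' x\<bar> + \<bar>f'' x\<bar>" using bnd by (simp add: S_def)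
  have bndU: "\<forall>x\<in>U. d \<le> \<bar>f' x\<bar> + \<bar>f'' x\<bar>" if "U \<subseteq> S" for U using bndS that by blast
  have perI: "f (x + of_int k) = f x" for x k using per_int[OF per] .
  have d1S: "\<forall>x\<in>S. (f has_real_derivative f' x) (at x within S)" using d1 by (simp add: S_def)
  have thS: "\<theta>m \<in> S" "\<theta>p \<in> S" using th subm subp by auto
  have bdryS: "\<forall>x\<in>frontier S. \<nu> \<le> \<bar>f' x\<bar>" using bdry by (simp add: S_def)
  have notfr: "x \<in> interior S" if "x \<in> S" "\<bar>f' x\<bar> < \<nu>" for x
  proof -
    have "x \<notin> frontier S" using bdryS that by force
    thus ?thesis using that closure_subset by (auto simp: frontier_def)
  qed
  show ?thesis
  proof (cases "am = bm")
    case True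
    have ce: "c = e"
    proof -
      have "{c..e} = {f am}" using onto_m True by simp
      thus ?thesis using J by (metis atLeastAtMost_iff atLeastAtMost_singleton_iff order_refl singletonD)
    qed
    have apbp: "ap = bp"
    proof (rule ccontr)
      assume "ap \<noteq> bp" hence lt: "ap < bp" using Ip by simp
      have "f ap < f bp"
        by (rule strict_incr[OF C2S[OF subp] mono_p bndU[OF subp] dD(1)]) (use lt in auto)
      moreover have "f ap \<in> {c..e}" "f bp \<in> {c..e}" using onto_p Ip by auto
      ultimately show False using ce by simp
    qed
    have eqs: "\<theta>m = am" "\<theta>p = ap" using th True apbp by auto
    have Sd: "S = circ_lift ({am..am} \<union> {ap..ap})" using True apbp by (simp add: S_def)
    have "\<theta>m \<in> frontier S" "\<theta>p \<in> frontier S"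
      using disc_frontier thS unfolding Sd by auto
    thus ?thesis using bdryS by auto
  next
    case False
    hence amb: "am < bm" using Im by simp
    have apb: "ap < bp"
    proof (rule ccontr)
      assume "\<not> ap < bp" hence "ap = bp" using Ip by simp
      hence "{c..e} = {f ap}" using onto_p by simp
      hence ce: "c = e" using J by (metis atLeastAtMost_iff atLeastAtMost_singleton_iff order_refl singletonD)
      have "f am > f bm"
        by (rule strict_decr[OF C2S[OF subm] mono_m bndU[OF subm] dD(1)]) (use amb in auto)
      moreover have "f am \<in> {c..e}" "f bm \<in> {c..e}" using onto_m Im by auto
      ultimately show False using ce by simp
    qed
    have incp: "\<And>x y. x \<in> {ap..bp} \<Longrightarrow> y \<in> {ap..bp} \<Longrightarrow> x < y \<Longrightarrow> f x < f y"
      by (rule strict_incr[OF C2S[OF subp] mono_p bndU[OF subp] dD(1)])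
    have decm: "\<And>x y. x \<in> {am..bm} \<Longrightarrow> y \<in> {am..bm} \<Longrightarrow> x < y \<Longrightarrow> f x > f y"
      by (rule strict_decr[OF C2S[OF subm] mono_m bndU[OF subm] dD(1)])
    have lp: "bp - ap < 1"
    proof (rule ccontr)
      assume "\<not> bp - ap < 1" hence "bp = ap + 1" using Ip by simp
      hence "f ap < f (ap + 1)" using incp[of ap bp] apb by simp
      thus False using per by simp
    qed
    have injp: "inj_on f {ap..bp}"
      by (rule inj_onI) (metis incp linorder_neqE_linordered_idom order_less_irrefl)
    have injm: "inj_on f {am..bm}"
      by (rule inj_onI) (metis decm linorder_neqE_linordered_idom order_less_irrefl)
    have Tf_eq: "Tf f am bm ap bp Estar = \<theta>p - \<theta>m"
      unfolding Tf_def using the_inv_into_f_f[OF injp th(2)] the_inv_into_f_f[OF injm th(1)] Eeq by simp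
    have shiftm: "f' x \<le> 0" if "x \<in> {am + of_int k..bm + of_int k}" for x k
    proof -
      have x: "x - of_int k \<in> {am..bm}" using that by auto
      have "f' ((x - of_int k) + of_int k) = f' (x - of_int k)"
        by (rule deriv_shift[OF d1S per subm shm amb x])
      thus ?thesis using mono_m x by simp
    qed
    have shiftp: "f' x \<ge> 0" if "x \<in> {ap + of_int k..bp + of_int k}" for x k
    proof -
      have x: "x - of_int k \<in> {ap..bp}" using that by auto
      have "f' ((x - of_int k) + of_int k) = f' (x - of_int k)"
        by (rule deriv_shift[OF d1S per subp shp apb x])
      thus ?thesis using mono_p x by simp
    qed
    have disj': "\<forall>x\<in>{ap<..<bp}. \<forall>y\<in>{am<..<bm}. x - y \<notin> \<int>"
    proof (intro ballI)
      fix x y assume xy: "x \<in> {ap<..<bp}" "y \<in> {am<..<bm}"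
      show "x - y \<notin> \<int>"
      proof
        assume "x - y \<in> \<int>"
        hence "-(x - y) \<in> \<int>" by (rule Ints_minus)
        thus False using disj xy by auto
      qed
    qed
    have lm: "bm - am < 1"
    proof (rule ccontr)
      assume "\<not> bm - am < 1" hence "bm = am + 1" using Im by simp
      hence "f am > f (am + 1)" using decm[of am bm] amb by simp
      thus False using per by simp
    qed
    have Sswap: "S = circ_lift ({ap..bp} \<union> {am..bm})" by (simp add: S_def Un_commute)
    have tn: "tnorm (\<theta>p - \<theta>m) \<le> \<bar>\<theta>p - \<theta>m - of_int j\<bar>" for j :: int
    proof -
      have "tnorm (\<theta>p - \<theta>m) \<le> dist (\<theta>p - \<theta>m) (of_int j)"
        unfolding tnorm_def by (rule infdist_le) simp
      thus ?thesis by (simp add: dist_real_def)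
    qed
    show ?thesis
    proof (rule ccontr)
      assume neg: "\<not> (\<nu> \<le> \<bar>f' \<theta>m\<bar> \<and> \<nu> \<le> \<bar>f' \<theta>p\<bar>)"
      have "\<exists>j::int. \<bar>\<theta>p - \<theta>m - of_int j\<bar> < 7 * \<nu> / d"
      proof (cases "\<bar>f' \<theta>p\<bar> < \<nu>")
        case True
        have f1p: "0 \<le> f' \<theta>p" "f' \<theta>p < \<nu>" using True mono_p th by auto
        have "f'' \<theta>p \<noteq> 0" using bndS thS True nu by force
        hence "f'' \<theta>p > 0 \<or> f'' \<theta>p < 0" by linarith
        thus ?thesis
        proof
          assume pos2: "f'' \<theta>p > 0"
          have s1: "{ap..\<theta>p} \<subseteq> S" using subp th by auto
          have "f' ap \<le> f' \<theta>p"
            by (rule lemA_Pp[OF C2S[OF s1] _ _ bndU[OF s1] f1p(2) pos2 nu]) (use th mono_p in auto)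
          moreover have "f' ap \<ge> 0" using mono_p Ip by auto
          ultimately have "ap \<in> interior S" using notfr subp Ip f1p by auto
          then obtain k :: int where k: "ap = bm + of_int k"
            using adjL[OF amb apb lp disj] unfolding S_def by blast
          have s2: "{am + of_int k..\<theta>p} \<subseteq> S"
          proof
            fix x assume x: "x \<in> {am + of_int k..\<theta>p}"
            show "x \<in> S"
            proof (cases "x \<le> ap")
              case True thus ?thesis using x shm[of k] k by auto
            next
              case False thus ?thesis using x subp th by auto
            qed
          qed
          have "\<theta>p - (\<theta>m + of_int k) < 7 * \<nu> / d"
          proof (rule lemB[OF C2S[OF s2], where p=ap])
            show "am + of_int k \<le> ap" using k Im by simp
            show "ap \<le> \<theta>p" using th by simp
            show "\<forall>x\<in>{am + of_int k..ap}. f' x \<le> 0" using shiftm k by auto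
            show "\<forall>x\<in>{ap..\<theta>p}. 0 \<le> f' x" using mono_p th by auto
            show "\<forall>x\<in>{am + of_int k..\<theta>p}. d \<le> \<bar>f' x\<bar> + \<bar>f'' x\<bar>" using bndU[OF s2] .
            show "f' \<theta>p < \<nu>" "0 < f'' \<theta>p" "0 < \<nu>" "\<nu> < d / 2" using f1p pos2 nu by auto
            show "\<theta>m + of_int k \<in> {am + of_int k..ap}" using th k by auto
            show "f (\<theta>m + of_int k) = f \<theta>p" using perI Eeq by simp
          qed
          moreover have "\<theta>m + of_int k \<le> \<theta>p" using th k by auto
          ultimately show ?thesis by (intro exI[of _ k]) auto
        next
          assume neg2: "f'' \<theta>p < 0"
          have s1: "{\<theta>p..bp} \<subseteq> S" using subp th by auto
          have "f' bp \<le> f' \<theta>p"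
            by (rule lemA_Pm[OF C2S[OF s1] _ _ bndU[OF s1] f1p(2) neg2 nu]) (use th mono_p in auto)
          moreover have "f' bp \<ge> 0" using mono_p Ip by auto
          ultimately have "bp \<in> interior S" using notfr subp Ip f1p by auto
          then obtain k :: int where k: "bp = am + of_int k"
            using adjR[OF amb apb lp disj] unfolding S_def by blast
          have s2: "{\<theta>p..bm + of_int k} \<subseteq> S"
          proof
            fix x assume x: "x \<in> {\<theta>p..bm + of_int k}"
            show "x \<in> S"
            proof (cases "x \<le> bp")
              case True thus ?thesis using x subp th by auto
            next
              case False thus ?thesis using x shm[of k] k by auto
            qed
          qed
          have "(\<theta>m + of_int k) - \<theta>p < 7 * \<nu> / d"
          proof (rule lemB_Pm[OF C2S[OF s2], where p=bp])
            show "\<theta>p \<le> bp" using th by simp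
            show "bp \<le> bm + of_int k" using k Im by simp
            show "\<forall>x\<in>{\<theta>p..bp}. 0 \<le> f' x" using mono_p th by auto
            show "\<forall>x\<in>{bp..bm + of_int k}. f' x \<le> 0" using shiftm k by auto
            show "\<forall>x\<in>{\<theta>p..bm + of_int k}. d \<le> \<bar>f' x\<bar> + \<bar>f'' x\<bar>" using bndU[OF s2] .
            show "f' \<theta>p < \<nu>" "f'' \<theta>p < 0" "0 < \<nu>" "\<nu> < d / 2" using f1p neg2 nu by auto
            show "\<theta>m + of_int k \<in> {bp..bm + of_int k}" using th k by auto
            show "f (\<theta>m + of_int k) = f \<theta>p" using perI Eeq by simp
          qed
          moreover have "\<theta>p \<le> \<theta>m + of_int k" using th k by auto
          ultimately show ?thesis by (intro exI[of _ k]) auto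
        qed
      next
        case False
        hence Tm: "\<bar>f' \<theta>m\<bar> < \<nu>" using neg by auto
        have f1m: "f' \<theta>m \<le> 0" "- f' \<theta>m < \<nu>" using Tm mono_m th by auto
        have "f'' \<theta>m \<noteq> 0" using bndS thS Tm nu by force
        hence "f'' \<theta>m > 0 \<or> f'' \<theta>m < 0" by linarith
        thus ?thesis
        proof
          assume pos2: "f'' \<theta>m > 0"
          have s1: "{\<theta>m..bm} \<subseteq> S" using subm th by auto
          have "f' bm \<ge> f' \<theta>m"
            by (rule lemA_Mp[OF C2S[OF s1] _ _ bndU[OF s1] f1m(2) pos2 nu]) (use th mono_m in auto)
          moreover have "f' bm \<le> 0" using mono_m Im by auto
          ultimately have "bm \<in> interior S" using notfr subm Im f1m by auto
          then obtain k :: int where k: "bm = ap + of_int k"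
            using adjR[OF apb amb lm disj'] unfolding Sswap by blast
          have s2: "{\<theta>m..bp + of_int k} \<subseteq> S"
          proof
            fix x assume x: "x \<in> {\<theta>m..bp + of_int k}"
            show "x \<in> S"
            proof (cases "x \<le> bm")
              case True thus ?thesis using x subm th by auto
            next
              case False thus ?thesis using x shp[of k] k by auto
            qed
          qed
          have "(\<theta>p + of_int k) - \<theta>m < 7 * \<nu> / d"
          proof (rule lemB_Mp[OF C2S[OF s2], where p=bm])
            show "\<theta>m \<le> bm" using th by simp
            show "bm \<le> bp + of_int k" using k Ip by simp
            show "\<forall>x\<in>{\<theta>m..bm}. f' x \<le> 0" using mono_m th by auto
            show "\<forall>x\<in>{bm..bp + of_int k}. 0 \<le> f' x" using shiftp k by auto
            show "\<forall>x\<in>{\<theta>m..bp + of_int k}. d \<le> \<bar>f' x\<bar> + \<bar>f'' x\<bar>" using bndU[OF s2] .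
            show "- f' \<theta>m < \<nu>" "0 < f'' \<theta>m" "0 < \<nu>" "\<nu> < d / 2" using f1m pos2 nu by auto
            show "\<theta>p + of_int k \<in> {bm..bp + of_int k}" using th k by auto
            show "f (\<theta>p + of_int k) = f \<theta>m" using perI Eeq by simp
          qed
          moreover have "\<theta>m \<le> \<theta>p + of_int k" using th k by auto
          ultimately show ?thesis by (intro exI[of _ "-k"]) auto
        next
          assume neg2: "f'' \<theta>m < 0"
          have s1: "{am..\<theta>m} \<subseteq> S" using subm th by auto
          have "f' am \<ge> f' \<theta>m"
            by (rule lemA_Mm[OF C2S[OF s1] _ _ bndU[OF s1] f1m(2) neg2 nu]) (use th mono_m in auto)
          moreover have "f' am \<le> 0" using mono_m Im by auto
          ultimately have "am \<in> interior S" using notfr subm Im f1m by auto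
          then obtain k :: int where k: "am = bp + of_int k"
            using adjL[OF apb amb lm disj'] unfolding Sswap by blast
          have s2: "{ap + of_int k..\<theta>m} \<subseteq> S"
          proof
            fix x assume x: "x \<in> {ap + of_int k..\<theta>m}"
            show "x \<in> S"
            proof (cases "x \<le> am")
              case True thus ?thesis using x shp[of k] k by auto
            next
              case False thus ?thesis using x subm th by auto
            qed
          qed
          have "\<theta>m - (\<theta>p + of_int k) < 7 * \<nu> / d"
          proof (rule lemB_Mm[OF C2S[OF s2], where p=am])
            show "ap + of_int k \<le> am" using k Ip by simp
            show "am \<le> \<theta>m" using th by simp
            show "\<forall>x\<in>{ap + of_int k..am}. 0 \<le> f' x" using shiftp k by auto
            show "\<forall>x\<in>{am..\<theta>m}. f' x \<le> 0" using mono_m th by auto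
            show "\<forall>x\<in>{ap + of_int k..\<theta>m}. d \<le> \<bar>f' x\<bar> + \<bar>f'' x\<bar>" using bndU[OF s2] .
            show "- f' \<theta>m < \<nu>" "f'' \<theta>m < 0" "0 < \<nu>" "\<nu> < d / 2" using f1m neg2 nu by auto
            show "\<theta>p + of_int k \<in> {ap + of_int k..am}" using th k by auto
            show "f (\<theta>p + of_int k) = f \<theta>m" using perI Eeq by simp
          qed
          moreover have "\<theta>p + of_int k \<le> \<theta>m" using th k by auto
          ultimately show ?thesis by (intro exI[of _ "-k"]) auto
        qed
      qed
      then obtain j :: int where "\<bar>\<theta>p - \<theta>m - of_int j\<bar> < 7 * \<nu> / d" by blast
      hence "tnorm (\<theta>p - \<theta>m) < 7 * \<nu> / d" using tn[of j] by linarith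
      thus False using big Tf_eq by simp
    qed
  qed
qed


end
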